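(* For every integer $k\ge 0$, $$\lim_{N\to\infty}\Pr[\mathcal{L}_N=k]=\frac{e^{-1}}{k!},$$ i.e. $\mathcal{L}_N$ converges in distribution to a Poisson random variable with mean $1$.
   Context: A random recursive hypergraph (RRH) is the random hypergraph process defined as follows. At size $N=1$ it has vertex set $\{v_1\}$ and edge set $\{\{v_1\}\}$. Given the hypergraph of size $N$ (vertices $v_1,\dots,v_N$, exactly $N$ edges), one chooses an existing edge $e$ uniformly at random, independently of the past, and adds a new vertex $v_{N+1}$ together with the new edge $e\cup\{v_{N+1}\}$. A leaf is a vertex $v\neq v_1$ such that the only edge containing $v$ is $\{v_1,v\}$. $\mathcal{L}_N$ denotes the number of leaves in the RRH of size $N$. *)

theory Defs
  imports "HOL-Probability.Probability"
begin

text \<open>Vertex v_i is represented by the natural number i. The hypergraph of size N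
is represented by its list of edges (edge j+1 is the j-th list entry); the
vertex set is {1..N}.\<close>

text \<open>rrh_aux n is the random edge list of the RRH of size n+1.\<close>
fun rrh_aux :: "nat \<Rightarrow> nat set list pmf" where
  "rrh_aux 0 = return_pmf [{1}]"
| "rrh_aux (Suc n) =
     bind_pmf (rrh_aux n) (\<lambda>es.
       map_pmf (\<lambda>i. es @ [insert (n + 2) (es ! i)]) (pmf_of_set {0..<length es}))"

definition RRH :: "nat \<Rightarrow> nat set list pmf" where
  "RRH N = rrh_aux (N - 1)"

definition leaves :: "nat \<Rightarrow> nat set list \<Rightarrow> nat" where
  "leaves N es = card {v. 2 \<le> v \<and> v \<le> N \<and> {e \<in> set es. v \<in> e} = {{1, v}}}"

end

theory Submission
  imports Defs
begin


definition rinv :: "nat \<Rightarrow> nat set list \<Rightarrow> bool" where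
  "rinv n es \<longleftrightarrow> length es = n+1 \<and> es!0 = {1} \<and>
     (\<forall>j. 1\<le>j \<and> j\<le>n \<longrightarrow> j+1 \<in> es!j \<and> es!j \<subseteq> {1..j+1})"

definition LS :: "nat \<Rightarrow> nat set list \<Rightarrow> nat set" where
  "LS N es = {v. 2\<le>v \<and> v\<le>N \<and> {e \<in> set es. v \<in> e} = {{1, v}}}"

lemma leaves_LS: "leaves N es = card (LS N es)"
  by (simp add: leaves_def LS_def)

lemma rinv_edge_sub:
  assumes "rinv n es" "j \<le> n" shows "es!j \<subseteq> {1..j+1}"
  using assms unfolding rinv_def by (cases "j = 0") auto

lemma rinv_set_sub:
  assumes "rinv n es" "e \<in> set es" shows "e \<subseteq> {1..n+1}"
proof -
  from assms(2) obtain j where j: "j < length es" "e = es!j" by (auto simp: in_set_conv_nth)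
  with assms(1) have "j \<le> n" by (simp add: rinv_def)
  with rinv_edge_sub[OF assms(1) this] j show ?thesis by auto
qed

lemma rinv_step:
  assumes "rinv n es" "i \<le> n"
  shows "rinv (Suc n) (es @ [insert (n+2) (es!i)])"
proof -
  have L: "length es = n+1" using assms by (simp add: rinv_def)
  have "es!i \<subseteq> {1..i+1}" by (rule rinv_edge_sub[OF assms])
  then have "insert (n+2) (es!i) \<subseteq> {1..n+2}" using assms(2) by auto
  then show ?thesis using assms L unfolding rinv_def
    by (auto simp: nth_append le_Suc_eq)
qed

lemma rinv_rrh: "es \<in> set_pmf (rrh_aux n) \<Longrightarrow> rinv n es"
proof (induction n arbitrary: es)
  case 0 then show ?case by (simp add: rinv_def)
next
  case (Suc n)
  then obtain es0 where es0: "es0 \<in> set_pmf (rrh_aux n)"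
     "es \<in> set_pmf (map_pmf (\<lambda>i. es0 @ [insert (n + 2) (es0 ! i)]) (pmf_of_set {0..<length es0}))"
    by auto
  have R: "rinv n es0" using Suc.IH es0(1) by blast
  then have "length es0 = n+1" by (simp add: rinv_def)
  with es0(2) obtain i where "i < n+1" "es = es0 @ [insert (n+2) (es0!i)]"
    by (auto simp: set_pmf_of_set)
  then show ?case using rinv_step[OF R, of i] by simp
qed

lemma LS_step:
  assumes R: "rinv n es" and i: "i \<le> n"
  shows "LS (n+2) (es @ [insert (n+2) (es!i)]) =
     (if i = 0 then insert (n+2) (LS (n+1) es) else LS (n+1) es - {i+1})"
    (is "LS _ ?es' = ?R")
proof (rule set_eqI)
  fix v
  let ?E = "insert (n+2) (es!i)"
  have L: "length es = n+1" using R by (simp add: rinv_def)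
  have esi_in: "es!i \<in> set es" using L i by auto
  have sub: "\<And>e. e \<in> set es \<Longrightarrow> e \<subseteq> {1..n+1}" using rinv_set_sub[OF R] by blast
  have e0: "es!0 = {1}" using R by (simp add: rinv_def)
  have ej: "i \<ge> 1 \<Longrightarrow> i+1 \<in> es!i \<and> es!i \<subseteq> {1..i+1}" using R i by (simp add: rinv_def)
  have set': "set ?es' = insert ?E (set es)" by simp
  show "v \<in> LS (n+2) ?es' \<longleftrightarrow> v \<in> ?R"
  proof (cases "v = n+2")
    case True
    have nn: "\<And>e. e \<in> set es \<Longrightarrow> v \<notin> e" using sub True by fastforce
    have X: "{e \<in> set ?es'. v \<in> e} = {?E}" using nn True by auto
    have "?E = {1, n+2} \<longleftrightarrow> i = 0"
    proof
      assume "?E = {1, n+2}"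
      moreover have "n+2 \<notin> es!i" using sub[OF esi_in] by auto
      ultimately have "es!i = {1}" by auto
      then show "i = 0" using ej by (cases "i = 0") auto
    qed (use e0 in auto)
    moreover have "n+2 \<notin> LS (n+1) es" by (simp add: LS_def)
    ultimately show ?thesis using X True by (auto simp: LS_def)
  next
    case vne: False
    show ?thesis
    proof (cases "v \<in> es!i")
      case True
      have mem: "?E \<in> {e \<in> set ?es'. v \<in> e}" using True by simp
      have ne: "?E \<noteq> {1, v}"
      proof
        assume "?E = {1, v}"
        then have "n+2 \<in> {1, v}" by (metis insertI1)
        then show False using vne by simp
      qed
      have "v \<notin> LS (n+2) ?es'"
      proof
        assume "v \<in> LS (n+2) ?es'"
        then have eq: "{e \<in> set ?es'. v \<in> e} = {{1,v}}" by (simp add: LS_def)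
        have "?E \<in> {{1,v}}" using mem eq by (simp only:)
        then show False using ne by simp
      qed
      moreover have "v \<notin> ?R"
      proof
        assume vR: "v \<in> ?R"
        have vL0: "v \<in> LS (n+1) es" using vR vne by (auto split: if_splits)
        then have v2: "v \<ge> 2" by (simp add: LS_def)
        have i0: "i \<noteq> 0"
        proof
          assume "i = 0"
          with True e0 have "v \<in> {1}" by simp
          with v2 show False by simp
        qed
        with vR have vi: "v \<noteq> i+1" by simp
        have eq: "{e \<in> set es. v \<in> e} = {{1,v}}" using vL0 by (simp add: LS_def)
        have "es!i \<in> {e \<in> set es. v \<in> e}" using esi_in True by simp
        then have "es!i \<in> {{1,v}}" by (simp only: eq)
        then have "es!i = {1,v}" by simp
        moreover have "i+1 \<in> es!i" using ej i0 by simp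
        ultimately have "i+1 \<in> {1,v}" by simp
        then show False using vi i0 by simp
      qed
      ultimately show ?thesis by blast
    next
      case nv: False
      have X: "{e \<in> set ?es'. v \<in> e} = {e \<in> set es. v \<in> e}" using nv vne by auto
      have a: "v \<in> LS (n+2) ?es' \<longleftrightarrow> (2 \<le> v \<and> v \<le> n+2 \<and> {e\<in>set es. v\<in>e} = {{1,v}})"
        by (simp only: LS_def mem_Collect_eq X)
      have b: "v \<in> LS (n+1) es \<longleftrightarrow> (2 \<le> v \<and> v \<le> n+1 \<and> {e\<in>set es. v\<in>e} = {{1,v}})"
        by (simp only: LS_def mem_Collect_eq)
      have c: "v \<le> n+2 \<longleftrightarrow> v \<le> n+1" using vne by arith
      have "v \<in> LS (n+2) ?es' \<longleftrightarrow> v \<in> LS (n+1) es" using a b c by meson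
      moreover have "i \<noteq> 0 \<Longrightarrow> v \<noteq> i+1" using nv ej by auto
      ultimately show ?thesis using vne by auto
    qed
  qed
qed



definition g :: "nat \<Rightarrow> nat \<Rightarrow> nat \<Rightarrow> real" where
  "g n k l = (if l+1=k then 1 else 0) + (if l = k+1 then real l else 0) + (if l = k then real n - real l else 0)"

lemma LS_mem: "v \<in> LS N es \<Longrightarrow> 2 \<le> v \<and> v \<le> N"
  unfolding LS_def mem_Collect_eq by (elim conjE, intro conjI, assumption+)

lemma LS_sub: "LS N es \<subseteq> {2..N}" using LS_mem by (meson atLeastAtMost_iff subsetI)

lemma count_step:
  assumes R: "rinv n es"
  shows "real (card {i\<in>{0..<n+1}. leaves (n+2) (es @ [insert (n+2) (es!i)]) = k}) = g n k (leaves (n+1) es)"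
proof -
  define S where "S = LS (n+1) es"
  define l where "l = card S"
  have finS: "finite S" unfolding S_def by (rule finite_subset[OF LS_sub]) simp
  have Ssub: "S \<subseteq> {2..n+1}" unfolding S_def by (rule LS_sub)
  let ?h = "\<lambda>i. leaves (n+2) (es @ [insert (n+2) (es!i)])"
  let ?f = "\<lambda>x. if x = k then 1 else (0::real)"
  have h0: "?h 0 = l+1"
  proof -
    have "?h 0 = card (insert (n+2) S)" using LS_step[OF R, of 0] by (simp add: leaves_LS S_def)
    also have "\<dots> = l + 1"
    proof -
      have "n+2 \<notin> S" using Ssub by auto
      then show ?thesis using finS by (simp add: l_def)
    qed
    finally show ?thesis .
  qed
  have hi: "?h i = (if i+1 \<in> S then l - 1 else l)" if "i \<in> {1..n}" for i
  proof -
    have "?h i = card (S - {i+1})" using LS_step[OF R, of i] that by (simp add: leaves_LS S_def)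
    also have "\<dots> = (if i+1 \<in> S then l - 1 else l)" using finS by (simp add: l_def)
    finally show ?thesis .
  qed
  define A where "A = {i\<in>{1..n}. i+1 \<in> S}"
  define B where "B = {i\<in>{1..n}. i+1 \<notin> S}"
  have SA: "S = Suc ` A"
  proof (rule set_eqI)
    fix v show "v \<in> S \<longleftrightarrow> v \<in> Suc ` A"
    proof
      assume "v \<in> S" then have "v \<in> {2..n+1}" using Ssub by blast
      then show "v \<in> Suc ` A" using \<open>v \<in> S\<close> unfolding A_def
        by (intro image_eqI[of _ _ "v - 1"]) auto
    qed (auto simp: A_def)
  qed
  have cA: "card A = l" unfolding l_def SA by (simp add: card_image)
  have AB: "A \<union> B = {1..n}" "A \<inter> B = {}" by (auto simp: A_def B_def)
  have cB: "card B = n - l"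
  proof -
    have "card A + card B = n" using card_Un_disjoint[of A B] AB by (simp add: A_def B_def)
    then show ?thesis using cA by simp
  qed
  have "real (card {i\<in>{0..<n+1}. ?h i = k}) = (\<Sum>i\<in>{i\<in>{0..<n+1}. ?h i = k}. (1::real))"
    by simp
  also have "\<dots> = (\<Sum>i\<in>{0..<n+1}. ?f (?h i))"
    by (simp only: sum.inter_filter[OF finite_atLeastLessThan])
  also have "(\<Sum>i\<in>{0..<n+1}. ?f (?h i)) = ?f (?h 0) + (\<Sum>i\<in>{1..n}. ?f (?h i))"
  proof -
    have ins: "{0..<n+1} = insert 0 {1..n}" by auto
    show ?thesis unfolding ins by (rule sum.insert) auto
  qed
  also have "(\<Sum>i\<in>{1..n}. ?f (?h i)) = (\<Sum>i\<in>{1..n}. if i+1 \<in> S then ?f (l-1) else ?f l)"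
    by (rule sum.cong[OF refl]) (simp only: hi, simp)
  also have "\<dots> = real (card A) * ?f (l-1) + real (card B) * ?f l"
    by (simp add: sum.If_cases A_def B_def Int_def Collect_conj_eq[symmetric])
  finally have E: "real (card {i\<in>{0..<n+1}. ?h i = k}) = ?f (?h 0) + (real (card A) * ?f (l-1) + real (card B) * ?f l)" .
  have "real (card {i\<in>{0..<n+1}. ?h i = k}) = ?f (l+1) + (real l * ?f (l-1) + real (n - l) * ?f l)"
    using E unfolding h0 cA cB .
  moreover have "l \<le> n"
  proof -
    have "card S \<le> card {2..n+1}" using Ssub by (intro card_mono) auto
    then show ?thesis by (simp add: l_def)
  qed
  ultimately show ?thesis unfolding g_def l_def S_def leaves_LS[symmetric]
    by (auto simp: of_nat_diff)
qed



definition LP :: "nat \<Rightarrow> nat pmf" where "LP n = map_pmf (leaves (n+1)) (rrh_aux n)"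

lemma LP_Suc_integral:
  "pmf (LP (Suc n)) k = (\<integral>l. g n k l / real (n+1) \<partial>measure_pmf (LP n))"
proof -
  have "pmf (LP (Suc n)) k = pmf (bind_pmf (rrh_aux n) (\<lambda>es.
      map_pmf (\<lambda>i. leaves (n+2) (es @ [insert (n + 2) (es ! i)])) (pmf_of_set {0..<length es}))) k"
    by (simp add: LP_def map_bind_pmf map_pmf_comp)
  also have "\<dots> = (\<integral>es. pmf (map_pmf (\<lambda>i. leaves (n+2) (es @ [insert (n + 2) (es ! i)]))
        (pmf_of_set {0..<length es})) k \<partial>measure_pmf (rrh_aux n))"
    by (rule pmf_bind)
  also have "\<dots> = (\<integral>es. g n k (leaves (n+1) es) / real (n+1) \<partial>measure_pmf (rrh_aux n))"
  proof (rule integral_cong_AE)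
    show "AE es in measure_pmf (rrh_aux n). pmf (map_pmf (\<lambda>i. leaves (n+2) (es @ [insert (n + 2) (es ! i)]))
        (pmf_of_set {0..<length es})) k = g n k (leaves (n+1) es) / real (n+1)"
    proof (rule AE_pmfI)
      fix es assume "es \<in> set_pmf (rrh_aux n)"
      then have R: "rinv n es" by (rule rinv_rrh)
      then have L: "length es = n+1" by (simp add: rinv_def)
      have st: "{0..<n+1} \<inter> (\<lambda>i. leaves (n+2) (es @ [insert (n + 2) (es ! i)])) -` {k}
          = {i\<in>{0..<n+1}. leaves (n+2) (es @ [insert (n + 2) (es ! i)]) = k}" by auto
      show "pmf (map_pmf (\<lambda>i. leaves (n+2) (es @ [insert (n + 2) (es ! i)]))
        (pmf_of_set {0..<length es})) k = g n k (leaves (n+1) es) / real (n+1)"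
      proof -
        have "measure_pmf.prob (pmf_of_set {0..<n+1}) ((\<lambda>i. leaves (n+2) (es @ [insert (n + 2) (es ! i)])) -` {k})
           = card ({0..<n+1} \<inter> (\<lambda>i. leaves (n+2) (es @ [insert (n + 2) (es ! i)])) -` {k}) / card {0..<n+1}"
          by (rule measure_pmf_of_set) auto
        then show ?thesis unfolding pmf_map L st using count_step[OF R, of k] by simp
      qed
    qed
  qed simp_all
  also have "\<dots> = (\<integral>l. g n k l / real (n+1) \<partial>measure_pmf (LP n))"
    by (simp add: LP_def)
  finally show ?thesis .
qed

lemma LP_Suc:
  "pmf (LP (Suc n)) k = ((if k = 0 then 0 else pmf (LP n) (k-1)) + real (k+1) * pmf (LP n) (k+1)
      + (real n - real k) * pmf (LP n) k) / real (n+1)"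
proof (cases k)
  case 0
  have "pmf (LP (Suc n)) k = (\<Sum>l\<in>{0,1}. g n k l / real (n+1) * pmf (LP n) l)"
    unfolding LP_Suc_integral
    by (rule integral_measure_pmf_real) (auto simp: g_def 0 split: if_splits)
  then show ?thesis by (simp add: g_def 0 add_divide_distrib algebra_simps)
next
  case (Suc k')
  have "pmf (LP (Suc n)) k = (\<Sum>l\<in>{k',k,k+1}. g n k l / real (n+1) * pmf (LP n) l)"
    unfolding LP_Suc_integral
    by (rule integral_measure_pmf_real) (auto simp: g_def Suc split: if_splits)
  then show ?thesis by (simp add: g_def Suc add_divide_distrib diff_divide_distrib algebra_simps)
qed



definition D :: "nat \<Rightarrow> real" where "D m = (\<Sum>i<m. (-1)^i / fact i)"

lemma D_0[simp]: "D 0 = 0" and D_1[simp]: "D 1 = 1" by (simp_all add: D_def)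

lemma D_Suc: "D (Suc m) = D m + (-1)^m / fact m" by (simp add: D_def)

lemma D_rec: "real (Suc j) * D (j+2) = D j + real j * D (j+1)"
proof -
  define a where "a = (-1::real)^j / fact j"
  have f: "(-1::real)^(Suc j) / fact (Suc j) = - a / real (Suc j)"
    unfolding a_def by (simp add: divide_simps)
  have d2: "D (j+2) = D j + a - a / real (Suc j)"
    using f by (simp add: D_Suc a_def)
  have d1: "D (j+1) = D j + a" by (simp add: D_Suc a_def)
  have q: "real (Suc j) * (a / real (Suc j)) = a" by simp
  have "real (Suc j) * D (j+2) = real (Suc j) * D j + real (Suc j) * a - real (Suc j) * (a / real (Suc j))"
    unfolding d2 by (simp add: algebra_simps)
  also have "\<dots> = real (Suc j) * D j + real (Suc j) * a - a" unfolding q ..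
  also have "\<dots> = D j + real j * D (j+1)" unfolding d1 by (simp add: algebra_simps)
  finally show ?thesis .
qed

lemma alg:
  "((if k = 0 then 0 else D (n+1-(k-1)) / fact (k-1)) + real (k+1) * (D (n+1-(k+1)) / fact (k+1))
      + (real n - real k) * (D (n+1-k) / fact k)) / real (n+1) = D (Suc n + 1 - k) / fact k"
proof (cases "k \<le> n")
  case True
  then obtain j where n: "n = k + j" by (metis le_add_diff_inverse)
  have e1: "n+1-(k+1) = j" "n+1-k = j+1" "Suc n + 1 - k = j+2" using n by auto
  have e2: "(if k = 0 then 0 else D (n+1-(k-1)) / fact (k-1)) = real k * D (j+2) / fact k"
  proof (cases k)
    case (Suc k')
    then have "n+1-(k-1) = j+2" using n by simp
    moreover have "fact k = real k * fact k'" using Suc by simp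
    ultimately show ?thesis using Suc by simp
  qed simp
  have e3: "fact (k+1) = real (k+1) * (fact k :: real)" by simp
  have e4: "real n - real k = real j" using n by simp
  have "real (k+1) * (D j / fact (k+1)) = D j / fact k"
  proof -
    have "real (k+1) \<noteq> 0" by simp
    then show ?thesis unfolding e3 by simp
  qed
  then have lhs: "((if k = 0 then 0 else D (n+1-(k-1)) / fact (k-1)) + real (k+1) * (D (n+1-(k+1)) / fact (k+1))
      + (real n - real k) * (D (n+1-k) / fact k))
      = (real k * D (j+2) + (D j + real j * D (j+1))) / fact k" (is "?N = _")
    unfolding e1 e2 e4 by (simp add: add_divide_distrib)
  have num: "?N = real (n+1) * D (j+2) / fact k"
  proof -
    have "?N = (real k * D (j+2) + real (Suc j) * D (j+2)) / fact k" using lhs D_rec[of j] by simp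
    also have "\<dots> = real (n+1) * D (j+2) / fact k" using n by (simp add: algebra_simps)
    finally show ?thesis .
  qed
  have "real (n+1) \<noteq> 0" by simp
  then show ?thesis using num e1(3) by simp
next
  case False
  show ?thesis
  proof (cases "k = n+1")
    case True
    have "fact k = real (n+1) * (fact n :: real)" using True by simp
    then show ?thesis using True by (simp add: field_simps)
  next
    case False
    with \<open>\<not> k \<le> n\<close> have "k \<ge> n+2" by simp
    then have "n+1-(k-1) = 0" "n+1-(k+1) = 0" "n+1-k = 0" "Suc n + 1 - k = 0" by auto
    then show ?thesis using \<open>k \<ge> n+2\<close> by simp
  qed
qed

lemma LP_formula: "pmf (LP n) k = D (n+1-k) / fact k"
proof (induction n arbitrary: k)
  case 0
  have "leaves 1 [{1}] = 0" by (simp add: leaves_def)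
  then have "LP 0 = return_pmf 0" by (simp add: LP_def)
  then show ?case by (cases k) (auto simp: indicator_def D_def)
next
  case (Suc n)
  show ?case unfolding LP_Suc Suc.IH alg[symmetric] ..
qed



lemma D_lim: "D \<longlonglongrightarrow> exp (-1)"
proof -
  have "(\<lambda>n. (-1::real)^n /\<^sub>R fact n) sums exp (-1)" by (rule exp_converges)
  then have "(\<lambda>n. (-1::real)^n / fact n) sums exp (-1)" by (simp add: divide_inverse mult.commute)
  then show ?thesis unfolding sums_def D_def[abs_def] .
qed

theorem mainTheorem12:
  fixes k :: nat
  shows "(\<lambda>N. measure_pmf.prob (RRH N) {es. leaves N es = k}) \<longlonglongrightarrow> exp (-1) / fact k"
proof (rule LIMSEQ_offset[where k = "k+1"])
  have eq: "measure_pmf.prob (RRH (n + (k+1))) {es. leaves (n + (k+1)) es = k} = D (n+1) / fact k" for n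
  proof -
    have "measure_pmf.prob (RRH (n + (k+1))) {es. leaves (n + (k+1)) es = k} = pmf (LP (n+k)) k"
      by (simp add: RRH_def LP_def pmf_map vimage_def)
    also have "\<dots> = D (n+1) / fact k" by (simp add: LP_formula)
    finally show ?thesis .
  qed
  have "(\<lambda>n. D (Suc n)) \<longlonglongrightarrow> exp (-1)" using D_lim by (rule LIMSEQ_Suc)
  then have "(\<lambda>n. D (n+1) / fact k) \<longlonglongrightarrow> exp (-1) / fact k" by (intro tendsto_divide tendsto_const) simp_all
  then show "(\<lambda>n. measure_pmf.prob (RRH (n + (k+1))) {es. leaves (n + (k+1)) es = k}) \<longlonglongrightarrow> exp (-1) / fact k"
    unfolding eq .
qed


end
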